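(* Let $p$ be an odd prime and $m>1$. Let $H$ be a subgroup of $\mathrm{GL}_m(p)$ of order coprime to $p$ which acts transitively on the nonzero vectors of $\mathbb{F}_p^m$, with $|H|\ge p^m-1$ and $|Z(H)|\ge\frac{p^m-1}{p}$. Then $H\cong\mathrm{GL}_1(p^m)$ is cyclic of order $p^m-1$. *)

theory Defs
  imports Complex_Main "HOL-Computational_Algebra.Primes" "HOL-Algebra.Elementary_Groups"
begin

text \<open>Vectors of F_p^m: functions nat => int with entries in {0..p-1} on
  indices below m (residues mod p) and zero elsewhere.\<close>
definition fvecs :: "nat \<Rightarrow> nat \<Rightarrow> (nat \<Rightarrow> int) set" where
  "fvecs m p = {v. (\<forall>i<m. 0 \<le> v i \<and> v i < int p) \<and> (\<forall>i\<ge>m. v i = 0)}"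

definition fmats :: "nat \<Rightarrow> nat \<Rightarrow> (nat \<Rightarrow> nat \<Rightarrow> int) set" where
  "fmats m p = {A. (\<forall>i<m. \<forall>j<m. 0 \<le> A i j \<and> A i j < int p)
                  \<and> (\<forall>i j. (i \<ge> m \<or> j \<ge> m) \<longrightarrow> A i j = 0)}"

definition fmat_mult :: "nat \<Rightarrow> nat \<Rightarrow> (nat \<Rightarrow> nat \<Rightarrow> int) \<Rightarrow> (nat \<Rightarrow> nat \<Rightarrow> int) \<Rightarrow> (nat \<Rightarrow> nat \<Rightarrow> int)" where
  "fmat_mult m p A B = (\<lambda>i j. if i < m \<and> j < m then (\<Sum>k<m. A i k * B k j) mod int p else 0)"

definition fmat_one :: "nat \<Rightarrow> nat \<Rightarrow> nat \<Rightarrow> int" where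
  "fmat_one m = (\<lambda>i j. if i < m \<and> j < m \<and> i = j then 1 else 0)"

definition fmat_vec :: "nat \<Rightarrow> nat \<Rightarrow> (nat \<Rightarrow> nat \<Rightarrow> int) \<Rightarrow> (nat \<Rightarrow> int) \<Rightarrow> (nat \<Rightarrow> int)" where
  "fmat_vec m p A v = (\<lambda>i. if i < m then (\<Sum>k<m. A i k * v k) mod int p else 0)"

definition GL :: "nat \<Rightarrow> nat \<Rightarrow> (nat \<Rightarrow> nat \<Rightarrow> int) monoid" where
  "GL m p = \<lparr> carrier = {A \<in> fmats m p. \<exists>B \<in> fmats m p.
                 fmat_mult m p A B = fmat_one m \<and> fmat_mult m p B A = fmat_one m},
             mult = fmat_mult m p, one = fmat_one m \<rparr>"

definition group_center :: "('a, 'b) monoid_scheme \<Rightarrow> 'a set" where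
  "group_center G = {z \<in> carrier G. \<forall>g \<in> carrier G. z \<otimes>\<^bsub>G\<^esub> g = g \<otimes>\<^bsub>G\<^esub> z}"

end

theory Submission
  imports Defs "HOL-Algebra.Multiplicative_Group"
begin

definition madd :: "nat \<Rightarrow> nat \<Rightarrow> (nat \<Rightarrow> nat \<Rightarrow> int) \<Rightarrow> (nat \<Rightarrow> nat \<Rightarrow> int) \<Rightarrow> (nat \<Rightarrow> nat \<Rightarrow> int)" where
  "madd m p A B = (\<lambda>i j. if i < m \<and> j < m then (A i j + B i j) mod int p else 0)"
definition mneg :: "nat \<Rightarrow> nat \<Rightarrow> (nat \<Rightarrow> nat \<Rightarrow> int) \<Rightarrow> (nat \<Rightarrow> nat \<Rightarrow> int)" where
  "mneg m p A = (\<lambda>i j. if i < m \<and> j < m then (- A i j) mod int p else 0)"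
definition msm :: "nat \<Rightarrow> nat \<Rightarrow> nat \<Rightarrow> (nat \<Rightarrow> nat \<Rightarrow> int) \<Rightarrow> (nat \<Rightarrow> nat \<Rightarrow> int)" where
  "msm m p k A = (\<lambda>i j. if i < m \<and> j < m then (int k * A i j) mod int p else 0)"
definition vadd :: "nat \<Rightarrow> nat \<Rightarrow> (nat \<Rightarrow> int) \<Rightarrow> (nat \<Rightarrow> int) \<Rightarrow> (nat \<Rightarrow> int)" where
  "vadd m p u w = (\<lambda>i. if i < m then (u i + w i) mod int p else 0)"
definition evec :: "nat \<Rightarrow> nat \<Rightarrow> int" where
  "evec j = (\<lambda>i. if i = j then 1 else 0)"

lemma sum_mod_right: "(\<Sum>k\<in>K. f k * (g k mod (q::int))) mod q = (\<Sum>k\<in>K. f k * g k) mod q"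
proof -
  have "(\<Sum>k\<in>K. f k * (g k mod q)) mod q = (\<Sum>k\<in>K. (f k * (g k mod q)) mod q) mod q"
    by (simp add: mod_sum_eq)
  also have "\<dots> = (\<Sum>k\<in>K. (f k * g k) mod q) mod q"
    by (simp add: mod_mult_right_eq)
  also have "\<dots> = (\<Sum>k\<in>K. f k * g k) mod q" by (simp add: mod_sum_eq)
  finally show ?thesis .
qed

lemma sum_mod_left: "(\<Sum>k\<in>K. (g k mod (q::int)) * f k) mod q = (\<Sum>k\<in>K. g k * f k) mod q"
  using sum_mod_right[of f g q K] by (simp add: mult.commute)

lemma mv_mm: "fmat_vec m p (fmat_mult m p A B) v = fmat_vec m p A (fmat_vec m p B v)"
proof
  fix i
  show "fmat_vec m p (fmat_mult m p A B) v i = fmat_vec m p A (fmat_vec m p B v) i"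
  proof (cases "i < m")
    case True
    have "fmat_vec m p (fmat_mult m p A B) v i = (\<Sum>l<m. ((\<Sum>k<m. A i k * B k l) mod int p) * v l) mod int p"
      using True unfolding fmat_vec_def fmat_mult_def by (auto intro!: arg_cong[where f="\<lambda>s. s mod int p"] sum.cong)
    also have "\<dots> = (\<Sum>l<m. (\<Sum>k<m. A i k * B k l) * v l) mod int p" by (rule sum_mod_left)
    also have "\<dots> = (\<Sum>l<m. \<Sum>k<m. A i k * B k l * v l) mod int p" by (simp add: sum_distrib_right)
    also have "\<dots> = (\<Sum>k<m. \<Sum>l<m. A i k * B k l * v l) mod int p" by (subst sum.swap) simp
    also have "\<dots> = (\<Sum>k<m. A i k * (\<Sum>l<m. B k l * v l)) mod int p" by (simp add: sum_distrib_left mult.assoc)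
    also have "\<dots> = (\<Sum>k<m. A i k * ((\<Sum>l<m. B k l * v l) mod int p)) mod int p" by (rule sum_mod_right[symmetric])
    also have "\<dots> = fmat_vec m p A (fmat_vec m p B v) i"
      using True unfolding fmat_vec_def by (auto intro!: arg_cong[where f="\<lambda>s. s mod int p"] sum.cong)
    finally show ?thesis .
  qed (simp add: fmat_vec_def)
qed

lemma mv_madd: "fmat_vec m p (madd m p A B) v = vadd m p (fmat_vec m p A v) (fmat_vec m p B v)"
proof
  fix i
  show "fmat_vec m p (madd m p A B) v i = vadd m p (fmat_vec m p A v) (fmat_vec m p B v) i"
  proof (cases "i < m")
    case True
    have "fmat_vec m p (madd m p A B) v i = (\<Sum>k<m. ((A i k + B i k) mod int p) * v k) mod int p"
      using True unfolding fmat_vec_def madd_def by (auto intro!: arg_cong[where f="\<lambda>s. s mod int p"] sum.cong)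
    also have "\<dots> = (\<Sum>k<m. (A i k + B i k) * v k) mod int p" by (rule sum_mod_left)
    also have "\<dots> = ((\<Sum>k<m. A i k * v k) + (\<Sum>k<m. B i k * v k)) mod int p"
      by (simp add: sum.distrib distrib_right)
    also have "\<dots> = ((\<Sum>k<m. A i k * v k) mod int p + (\<Sum>k<m. B i k * v k) mod int p) mod int p"
      by (simp add: mod_add_eq)
    also have "\<dots> = vadd m p (fmat_vec m p A v) (fmat_vec m p B v) i"
      using True unfolding fmat_vec_def vadd_def by simp
    finally show ?thesis .
  qed (simp add: fmat_vec_def vadd_def)
qed

lemma mv_vadd: "fmat_vec m p A (vadd m p u w) = vadd m p (fmat_vec m p A u) (fmat_vec m p A w)"
proof
  fix i
  show "fmat_vec m p A (vadd m p u w) i = vadd m p (fmat_vec m p A u) (fmat_vec m p A w) i"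
  proof (cases "i < m")
    case True
    have "fmat_vec m p A (vadd m p u w) i = (\<Sum>k<m. A i k * ((u k + w k) mod int p)) mod int p"
      using True unfolding fmat_vec_def vadd_def by (auto intro!: arg_cong[where f="\<lambda>s. s mod int p"] sum.cong)
    also have "\<dots> = (\<Sum>k<m. A i k * (u k + w k)) mod int p" by (rule sum_mod_right)
    also have "\<dots> = ((\<Sum>k<m. A i k * u k) + (\<Sum>k<m. A i k * w k)) mod int p"
      by (simp add: sum.distrib distrib_left)
    also have "\<dots> = ((\<Sum>k<m. A i k * u k) mod int p + (\<Sum>k<m. A i k * w k) mod int p) mod int p"
      by (simp add: mod_add_eq)
    also have "\<dots> = vadd m p (fmat_vec m p A u) (fmat_vec m p A w) i"
      using True unfolding fmat_vec_def vadd_def by simp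
    finally show ?thesis .
  qed (simp add: fmat_vec_def vadd_def)
qed

lemma mv_zero_mat: "fmat_vec m p (\<lambda>_ _. 0) v = (\<lambda>_. 0)"
  by (auto simp: fmat_vec_def)

lemma mv_zero_vec: "fmat_vec m p A (\<lambda>_. 0) = (\<lambda>_. 0)"
  by (auto simp: fmat_vec_def)

lemma mv_one: assumes "v \<in> fvecs m p" shows "fmat_vec m p (fmat_one m) v = v"
proof
  fix i
  show "fmat_vec m p (fmat_one m) v i = v i"
  proof (cases "i < m")
    case True
    have "(\<Sum>k<m. fmat_one m i k * v k) = (\<Sum>k\<in>{i}. v k)"
      by (rule sum.mono_neutral_cong_right) (use True in \<open>auto simp: fmat_one_def\<close>)
    then show ?thesis using True assms by (simp add: fmat_vec_def fvecs_def)
  qed (use assms in \<open>simp add: fmat_vec_def fvecs_def\<close>)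
qed

lemma mv_closed: assumes "p > 0" shows "fmat_vec m p A v \<in> fvecs m p"
  using assms by (auto simp: fmat_vec_def fvecs_def)

lemma vadd_closed: assumes "p > 0" shows "vadd m p u v \<in> fvecs m p"
  using assms by (auto simp: vadd_def fvecs_def)

lemma madd_closed: assumes "p > 0" shows "madd m p A B \<in> fmats m p"
  using assms by (auto simp: madd_def fmats_def)

lemma mneg_closed: assumes "p > 0" shows "mneg m p A \<in> fmats m p"
  using assms by (auto simp: mneg_def fmats_def)

lemma mm_closed: assumes "p > 0" shows "fmat_mult m p A B \<in> fmats m p"
  using assms by (auto simp: fmat_mult_def fmats_def)

lemma evec_in: assumes "p > 1" "j < m" shows "evec j \<in> fvecs m p"
  using assms by (auto simp: evec_def fvecs_def)

lemma mv_evec: assumes "A \<in> fmats m p" "i < m" "j < m"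
  shows "fmat_vec m p A (evec j) i = A i j"
proof -
  have "(\<Sum>k<m. A i k * evec j k) = (\<Sum>k\<in>{j}. A i k)"
    by (rule sum.mono_neutral_cong_right) (use assms in \<open>auto simp: evec_def\<close>)
  then show ?thesis using assms by (simp add: fmat_vec_def fmats_def)
qed

lemma mat_ext: assumes "p > 1" "A \<in> fmats m p" "B \<in> fmats m p"
  and "\<And>v. v \<in> fvecs m p \<Longrightarrow> fmat_vec m p A v = fmat_vec m p B v"
  shows "A = B"
proof (intro ext)
  fix i j
  show "A i j = B i j"
  proof (cases "i < m \<and> j < m")
    case True
    have "fmat_vec m p A (evec j) = fmat_vec m p B (evec j)"
      using assms(4) evec_in[OF assms(1)] True by blast
    then have "fmat_vec m p A (evec j) i = fmat_vec m p B (evec j) i" by simp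
    then show ?thesis using mv_evec[OF assms(2), of i j] mv_evec[OF assms(3), of i j] True by simp
  next
    case False
    then show ?thesis using assms(2,3) unfolding fmats_def by auto
  qed
qed

lemma vadd_assoc: "vadd m p (vadd m p u v) w = vadd m p u (vadd m p v w)"
  by (intro ext) (auto simp: vadd_def add.assoc mod_add_left_eq mod_add_right_eq)

lemma vadd_comm: "vadd m p u v = vadd m p v u"
  by (intro ext) (auto simp: vadd_def add.commute)

lemma vadd_zero: assumes "u \<in> fvecs m p" shows "vadd m p u (\<lambda>_. 0) = u"
  using assms by (intro ext) (auto simp: vadd_def fvecs_def)

lemma madd_assoc: "madd m p (madd m p A B) C = madd m p A (madd m p B C)"
  by (intro ext) (auto simp: madd_def add.assoc mod_add_left_eq mod_add_right_eq)

lemma madd_comm: "madd m p A B = madd m p B A"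
  by (intro ext) (auto simp: madd_def add.commute)

lemma madd_zero: assumes "A \<in> fmats m p" shows "madd m p A (\<lambda>_ _. 0) = A"
  using assms by (intro ext) (auto simp: madd_def fmats_def)

lemma madd_zero_l: assumes "A \<in> fmats m p" shows "madd m p (\<lambda>_ _. 0) A = A"
  using assms by (intro ext) (auto simp: madd_def fmats_def)

lemma madd_neg: "madd m p (mneg m p A) A = (\<lambda>_ _. 0)"
  by (intro ext) (auto simp: madd_def mneg_def mod_add_left_eq)

lemma msm_Suc: "msm m p (Suc k) A = madd m p (msm m p k A) A"
  by (intro ext) (auto simp: madd_def msm_def mod_add_left_eq mod_add_right_eq algebra_simps)

lemma msm_0: "msm m p 0 A = (\<lambda>_ _. 0)"
  by (intro ext) (auto simp: msm_def)

lemma mneg_msm: assumes "p > 0" shows "mneg m p A = msm m p (p - 1) A"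
proof -
  have "(- x) mod int p = (int (p - 1) * x) mod int p" for x
  proof -
    have e: "int (p - 1) * x = - x + int p * x" using assms by (simp add: of_nat_diff algebra_simps)
    show ?thesis unfolding e by (rule mod_mult_self2[symmetric])
  qed
  then show ?thesis by (intro ext) (auto simp: mneg_def msm_def)
qed

lemma madd_cancel: assumes "A \<in> fmats m p" "B \<in> fmats m p" "madd m p A (mneg m p B) = (\<lambda>_ _. 0)"
  shows "A = B"
proof -
  have "A = madd m p A (madd m p (mneg m p B) B)" using madd_neg madd_zero assms by metis
  also have "\<dots> = madd m p (madd m p A (mneg m p B)) B" by (simp add: madd_assoc)
  also have "\<dots> = B" using assms madd_zero_l by simp
  finally show ?thesis .
qed


lemma fvecs_0: "fvecs 0 p = {(\<lambda>_. 0)}"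
  by (auto simp: fvecs_def)

lemma fvecs_Suc: "fvecs (Suc m) p = (\<lambda>(v, x). v(m := x)) ` (fvecs m p \<times> {0..<int p})"
proof (intro equalityI subsetI)
  fix w assume w: "w \<in> fvecs (Suc m) p"
  have "w = (\<lambda>(v, x). v(m := x)) (w(m := 0), w m)" by simp
  moreover have "(w(m := 0), w m) \<in> fvecs m p \<times> {0..<int p}"
    using w by (auto simp: fvecs_def)
  ultimately show "w \<in> (\<lambda>(v, x). v(m := x)) ` (fvecs m p \<times> {0..<int p})" by blast
next
  fix w assume "w \<in> (\<lambda>(v, x). v(m := x)) ` (fvecs m p \<times> {0..<int p})"
  then show "w \<in> fvecs (Suc m) p" by (auto simp: fvecs_def less_Suc_eq)
qed

lemma card_fvecs: "card (fvecs m p) = p ^ m \<and> finite (fvecs m p)"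
proof (induction m)
  case 0 then show ?case by (simp add: fvecs_0)
next
  case (Suc m)
  have inj: "inj_on (\<lambda>(v, x). v(m := x)) (fvecs m p \<times> {0..<int p})"
  proof (rule inj_onI, clarify)
    fix v x v' x'
    assume a: "v \<in> fvecs m p" "v' \<in> fvecs m p" and e: "v(m := x) = v'(m := x')"
    have "x = x'" using fun_cong[OF e, of m] by simp
    moreover have "v = v'"
    proof
      fix i show "v i = v' i"
        using fun_cong[OF e, of i] a by (cases "i = m") (auto simp: fvecs_def)
    qed
    ultimately show "v = v' \<and> x = x'" by simp
  qed
  then show ?case using Suc unfolding fvecs_Suc
    by (simp add: card_image card_cartesian_product)
qed

inductive_set Acl :: "nat \<Rightarrow> nat \<Rightarrow> (nat \<Rightarrow> nat \<Rightarrow> int) set \<Rightarrow> (nat \<Rightarrow> nat \<Rightarrow> int) set"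
  for m p Z where
  Acl0: "(\<lambda>_ _. 0) \<in> Acl m p Z"
| AclS: "a \<in> Acl m p Z \<Longrightarrow> z \<in> Z \<Longrightarrow> madd m p a z \<in> Acl m p Z"

definition Rg :: "nat \<Rightarrow> nat \<Rightarrow> (nat \<Rightarrow> nat \<Rightarrow> int) set \<Rightarrow> (nat \<Rightarrow> nat \<Rightarrow> int) ring" where
  "Rg m p Z = \<lparr>carrier = Acl m p Z, mult = fmat_mult m p, one = fmat_one m,
               zero = (\<lambda>_ _. 0), add = madd m p\<rparr>"

lemma mm_assoc: assumes "p > 1"
  shows "fmat_mult m p (fmat_mult m p A B) C = fmat_mult m p A (fmat_mult m p B C)"
  using assms by (intro mat_ext[where m=m]) (auto simp: mv_mm intro!: mm_closed)

lemma mm_one_l: assumes "p > 1" "A \<in> fmats m p" shows "fmat_mult m p (fmat_one m) A = A"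
  using assms by (intro mat_ext[where m=m]) (auto simp: mv_mm mv_one mv_closed intro!: mm_closed)

lemma mm_one_r: assumes "p > 1" "A \<in> fmats m p" shows "fmat_mult m p A (fmat_one m) = A"
  using assms by (intro mat_ext[where m=m]) (auto simp: mv_mm mv_one mv_closed intro!: mm_closed)

lemma mm_distr_r: assumes "p > 1"
  shows "fmat_mult m p A (madd m p B C) = madd m p (fmat_mult m p A B) (fmat_mult m p A C)"
  using assms by (intro mat_ext[where m=m]) (auto simp: mv_mm mv_madd mv_vadd intro!: mm_closed madd_closed)

lemma mm_distr_l: assumes "p > 1"
  shows "fmat_mult m p (madd m p B C) A = madd m p (fmat_mult m p B A) (fmat_mult m p C A)"
  using assms by (intro mat_ext[where m=m]) (auto simp: mv_mm mv_madd intro!: mm_closed madd_closed)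

lemma mm_zero_l: "fmat_mult m p (\<lambda>_ _. 0) A = (\<lambda>_ _. 0)"
  by (intro ext) (simp add: fmat_mult_def)

lemma mm_zero_r: "fmat_mult m p A (\<lambda>_ _. 0) = (\<lambda>_ _. 0)"
  by (intro ext) (simp add: fmat_mult_def)

lemma zero_in_fmats: "p > 0 \<Longrightarrow> (\<lambda>_ _. 0) \<in> fmats m p"
  by (auto simp: fmats_def)

lemma one_in_fmats: "p > 1 \<Longrightarrow> fmat_one m \<in> fmats m p"
  by (auto simp: fmats_def fmat_one_def)

lemma GL_group: assumes "p > 1" shows "group (GL m p)"
proof (rule groupI)
  fix x y assume x: "x \<in> carrier (GL m p)" and y: "y \<in> carrier (GL m p)"
  obtain x' where x': "x' \<in> fmats m p" "fmat_mult m p x x' = fmat_one m" "fmat_mult m p x' x = fmat_one m"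
    using x by (auto simp: GL_def)
  obtain y' where y': "y' \<in> fmats m p" "fmat_mult m p y y' = fmat_one m" "fmat_mult m p y' y = fmat_one m"
    using y by (auto simp: GL_def)
  have "fmat_mult m p (fmat_mult m p x y) (fmat_mult m p y' x') = fmat_one m"
    using assms x' y' x by (simp add: mm_assoc[OF assms], subst mm_assoc[OF assms, symmetric])
       (simp add: mm_one_l GL_def)
  moreover have "fmat_mult m p (fmat_mult m p y' x') (fmat_mult m p x y) = fmat_one m"
    using assms x' y' y by (simp add: mm_assoc[OF assms], subst mm_assoc[OF assms, symmetric])
       (simp add: mm_one_l GL_def)
  ultimately show "x \<otimes>\<^bsub>GL m p\<^esub> y \<in> carrier (GL m p)"
    using assms by (auto simp: GL_def intro!: mm_closed)
next
  show "\<one>\<^bsub>GL m p\<^esub> \<in> carrier (GL m p)"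
    using assms by (auto simp: GL_def one_in_fmats mm_one_l intro!: bexI[of _ "fmat_one m"])
next
  fix x y z assume "x \<in> carrier (GL m p)" "y \<in> carrier (GL m p)" "z \<in> carrier (GL m p)"
  then show "x \<otimes>\<^bsub>GL m p\<^esub> y \<otimes>\<^bsub>GL m p\<^esub> z = x \<otimes>\<^bsub>GL m p\<^esub> (y \<otimes>\<^bsub>GL m p\<^esub> z)"
    using assms by (simp add: GL_def mm_assoc)
next
  fix x assume "x \<in> carrier (GL m p)"
  then show "\<one>\<^bsub>GL m p\<^esub> \<otimes>\<^bsub>GL m p\<^esub> x = x" using assms by (simp add: GL_def mm_one_l)
next
  fix x assume x: "x \<in> carrier (GL m p)"
  then obtain x' where x': "x' \<in> fmats m p" "fmat_mult m p x x' = fmat_one m" "fmat_mult m p x' x = fmat_one m"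
    by (auto simp: GL_def)
  have "x' \<in> carrier (GL m p)" using x x' by (auto simp: GL_def)
  then show "\<exists>y\<in>carrier (GL m p). y \<otimes>\<^bsub>GL m p\<^esub> x = \<one>\<^bsub>GL m p\<^esub>" using x' by (auto simp: GL_def)
qed


lemma numeric:
  fixes p q c m :: nat
  assumes m1: "m > 1" and p1: "p > 1" and q2: "q * q \<le> p ^ m" and cq: "c + 1 \<le> q"
    and zb': "real p ^ m - 1 \<le> real p * real c"
  shows False
proof -
  have pm: "p * p \<le> p ^ m"
  proof -
    have "p ^ 2 \<le> p ^ m" using m1 p1 by (intro power_increasing) auto
    then show ?thesis by (simp add: power2_eq_square)
  qed
  have r1: "real q * real q \<le> real p ^ m" using q2 by (metis of_nat_le_iff of_nat_mult of_nat_power)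
  have r2: "real p * real p \<le> real p ^ m" using pm by (metis of_nat_le_iff of_nat_mult of_nat_power)
  have r3: "real c + 1 \<le> real q" using cq by simp
  have r4: "real p \<ge> 2" using p1 by simp
  have "real c \<le> real q - 1" using r3 by simp
  then have "real p * real c \<le> real p * (real q - 1)" by (rule mult_left_mono) (use r4 in simp)
  then have B: "real p * (real q - 1) \<ge> real p ^ m - 1" using zb' by linarith
  then have A1: "real p * (real q - 1) \<ge> real q * real q - 1" using r1 by linarith
  have pp4: "2 * 2 \<le> real p * real p" by (rule mult_mono[OF r4 r4]) auto
  have qge: "real q \<ge> 2"
  proof (rule ccontr)
    assume "\<not> real q \<ge> 2"
    then have "q \<le> 1" by simp
    then have "real q - 1 \<le> 0" by simp
    then have "real p * (real q - 1) \<le> real p * 0" by (rule mult_left_mono) (use r4 in simp)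
    then show False using B r2 pp4 by linarith
  qed
  have "(real q + 1) * (real q - 1) \<le> real p * (real q - 1)" using A1 by (simp add: algebra_simps)
  then have pq: "real q + 1 \<le> real p" by (rule mult_right_le_imp_le) (use qge in simp)
  have "real q - 1 \<le> real p - 2" using pq by simp
  then have "real p * (real q - 1) \<le> real p * (real p - 2)" by (rule mult_left_mono) (use r4 in simp)
  then have "real p * (real p - 2) \<ge> real p * real p - 1"
    using B r2 by linarith
  then show False using r4 by (simp add: algebra_simps)
qed

locale lctx =
  fixes p m :: nat and H :: "(nat \<Rightarrow> nat \<Rightarrow> int) set"
  assumes p1: "p > 1" and m0: "m > 0" and sub: "subgroup H (GL m p)"
    and trans: "\<forall>v \<in> fvecs m p - {(\<lambda>_. 0)}. \<forall>w \<in> fvecs m p - {(\<lambda>_. 0)}.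
           \<exists>h \<in> H. fmat_vec m p h v = w"
begin

abbreviation "ZZ \<equiv> group_center ((GL m p)\<lparr>carrier := H\<rparr>)"
abbreviation "AA \<equiv> Acl m p ZZ"
abbreviation "VV \<equiv> fvecs m p"
abbreviation mm where "mm \<equiv> fmat_mult m p"
abbreviation mv where "mv \<equiv> fmat_vec m p"
abbreviation ad where "ad \<equiv> madd m p"
abbreviation "ZM \<equiv> (\<lambda>_ _. 0) :: nat \<Rightarrow> nat \<Rightarrow> int"
abbreviation "IM \<equiv> fmat_one m"

lemma p0: "p > 0" using p1 by simp

lemma H_M: "h \<in> H \<Longrightarrow> h \<in> fmats m p"
  using subgroup.subset[OF sub] by (auto simp: GL_def)

lemma H_one: "IM \<in> H"
  using subgroup.one_closed[OF sub] by (simp add: GL_def)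

lemma H_mult: "x \<in> H \<Longrightarrow> y \<in> H \<Longrightarrow> mm x y \<in> H"
  using subgroup.m_closed[OF sub] by (simp add: GL_def)

lemma Z_eq: "ZZ = {z \<in> H. \<forall>g\<in>H. mm z g = mm g z}"
  by (simp add: group_center_def GL_def)

lemma Z_H: "z \<in> ZZ \<Longrightarrow> z \<in> H" by (simp add: Z_eq)

lemma Z_M: "z \<in> ZZ \<Longrightarrow> z \<in> fmats m p" using Z_H H_M by blast

lemma Z_comm: "z \<in> ZZ \<Longrightarrow> g \<in> H \<Longrightarrow> mm z g = mm g z" by (simp add: Z_eq)

lemma Z_mult: assumes "x \<in> ZZ" "y \<in> ZZ" shows "mm x y \<in> ZZ"
proof -
  have "mm (mm x y) g = mm g (mm x y)" if "g \<in> H" for g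
  proof -
    have "mm (mm x y) g = mm x (mm y g)" by (rule mm_assoc[OF p1])
    also have "\<dots> = mm x (mm g y)" using Z_comm[OF assms(2) that] by simp
    also have "\<dots> = mm (mm x g) y" by (rule mm_assoc[OF p1, symmetric])
    also have "\<dots> = mm (mm g x) y" using Z_comm[OF assms(1) that] by simp
    also have "\<dots> = mm g (mm x y)" by (rule mm_assoc[OF p1])
    finally show ?thesis .
  qed
  then show ?thesis unfolding Z_eq using Z_H[OF assms(1)] Z_H[OF assms(2)] H_mult by blast
qed

lemma one_Z: "IM \<in> ZZ"
  unfolding Z_eq using H_one by (auto simp: mm_one_l[OF p1] mm_one_r[OF p1] H_M)

lemma A_M: "a \<in> AA \<Longrightarrow> a \<in> fmats m p"
  by (induction rule: Acl.induct) (auto simp: zero_in_fmats p0 madd_closed)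

lemma Z_A: assumes "z \<in> ZZ" shows "z \<in> AA"
proof -
  have "ad ZM z \<in> AA" by (rule Acl.AclS[OF Acl.Acl0 assms])
  then show ?thesis using madd_zero_l[OF Z_M[OF assms]] by simp
qed

lemma A_add: assumes "a \<in> AA" "b \<in> AA" shows "ad a b \<in> AA"
  using assms(2)
proof (induction rule: Acl.induct)
  case Acl0 then show ?case using madd_zero[OF A_M[OF assms(1)]] assms(1) by simp
next
  case (AclS b z) then show ?case by (metis Acl.AclS madd_assoc)
qed

lemma A_msm: "a \<in> AA \<Longrightarrow> msm m p k a \<in> AA"
  by (induction k) (auto simp: msm_0 msm_Suc Acl.Acl0 A_add)

lemma A_neg: "a \<in> AA \<Longrightarrow> mneg m p a \<in> AA"
  by (simp add: mneg_msm[OF p0] A_msm)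

lemma A_comm_H: assumes "a \<in> AA" "h \<in> H" shows "mm a h = mm h a"
  using assms(1)
proof (induction rule: Acl.induct)
  case Acl0 then show ?case by (simp add: mm_zero_l mm_zero_r)
next
  case (AclS a z) then show ?case
    using Z_comm[OF AclS(2) assms(2)] by (simp add: mm_distr_l[OF p1] mm_distr_r[OF p1])
qed

lemma A_mult_Z: assumes "a \<in> AA" "z \<in> ZZ" shows "mm a z \<in> AA"
  using assms(1)
proof (induction rule: Acl.induct)
  case Acl0 then show ?case by (simp add: mm_zero_l Acl.Acl0)
next
  case (AclS a z') then show ?case
    using Z_A[OF Z_mult[OF AclS(2) assms(2)]] by (simp add: mm_distr_l[OF p1] A_add)
qed

lemma A_mult: assumes "a \<in> AA" "b \<in> AA" shows "mm a b \<in> AA"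
  using assms(2)
proof (induction rule: Acl.induct)
  case Acl0 then show ?case by (simp add: mm_zero_r Acl.Acl0)
next
  case (AclS b z) then show ?case
    using A_mult_Z[OF assms(1) AclS(2)] by (simp add: mm_distr_r[OF p1] A_add)
qed

lemma A_comm: assumes "a \<in> AA" "b \<in> AA" shows "mm a b = mm b a"
  using assms(2)
proof (induction rule: Acl.induct)
  case Acl0 then show ?case by (simp add: mm_zero_l mm_zero_r)
next
  case (AclS b z) then show ?case
    using A_comm_H[OF assms(1) Z_H[OF AclS(2)]] by (simp add: mm_distr_l[OF p1] mm_distr_r[OF p1])
qed

lemma kernel: assumes "a \<in> AA" "v \<in> VV" "v \<noteq> (\<lambda>_. 0)" "mv a v = (\<lambda>_. 0)"
  shows "a = ZM"
proof (rule mat_ext[OF p1 A_M[OF assms(1)] zero_in_fmats[OF p0]])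
  fix w assume w: "w \<in> VV"
  show "mv a w = mv ZM w"
  proof (cases "w = (\<lambda>_. 0)")
    case True then show ?thesis by (simp add: mv_zero_vec mv_zero_mat)
  next
    case False
    then obtain h where h: "h \<in> H" "mv h v = w" using trans assms(2,3) w by blast
    have "mv a w = mv (mm a h) v" using h by (simp add: mv_mm)
    also have "\<dots> = mv (mm h a) v" using A_comm_H[OF assms(1) h(1)] by simp
    also have "\<dots> = (\<lambda>_. 0)" using assms(4) by (simp add: mv_mm mv_zero_vec)
    finally show ?thesis by (simp add: mv_zero_mat)
  qed
qed

lemma nonzero_witness: assumes "a \<in> AA" "a \<noteq> ZM" obtains v where "v \<in> VV" "mv a v \<noteq> (\<lambda>_. 0)"
proof -
  have "\<exists>v\<in>VV. mv a v \<noteq> (\<lambda>_. 0)"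
  proof (rule ccontr)
    assume "\<not> ?thesis"
    then have "a = ZM" using mat_ext[OF p1 A_M[OF assms(1)] zero_in_fmats[OF p0]]
      by (auto simp: mv_zero_mat)
    then show False using assms(2) by simp
  qed
  then show ?thesis using that by blast
qed


lemma v0_in: "(evec 0) \<in> VV" using evec_in[OF p1 m0] by simp
lemma v0_nz: "(evec 0) \<noteq> (\<lambda>_. 0)"
proof -
  have "(evec 0) 0 = 1" by (simp add: evec_def)
  then show ?thesis by auto
qed

lemma sub_zero: assumes "a \<in> AA" "b \<in> AA" "mv a v = mv b v"
  shows "mv (ad a (mneg m p b)) v = (\<lambda>_. 0)"
proof -
  have "mv (ad a (mneg m p b)) v = vadd m p (mv b v) (mv (mneg m p b) v)"
    by (simp add: mv_madd assms(3))
  also have "\<dots> = mv (ad (mneg m p b) b) v" by (simp add: mv_madd vadd_comm)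
  also have "\<dots> = (\<lambda>_. 0)" by (simp add: madd_neg mv_zero_mat)
  finally show ?thesis .
qed

lemma inj_v: assumes "v \<in> VV" "v \<noteq> (\<lambda>_. 0)" shows "inj_on (\<lambda>a. mv a v) AA"
proof (rule inj_onI)
  fix a b assume ab: "a \<in> AA" "b \<in> AA" "mv a v = mv b v"
  have "ad a (mneg m p b) = ZM"
    using kernel[OF A_add[OF ab(1) A_neg[OF ab(2)]] assms sub_zero[OF ab]] .
  then show "a = b" using madd_cancel A_M ab by blast
qed

lemma VV_fin: "finite VV" and VV_card: "card VV = p ^ m" using card_fvecs by auto

lemma A_fin: "finite AA"
  using inj_on_finite[OF inj_v[OF v0_in v0_nz] _ VV_fin] mv_closed[OF p0] by blast

lemma A_card: "card AA \<le> p ^ m"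
  using card_inj_on_le[OF inj_v[OF v0_in v0_nz] _ VV_fin] mv_closed[OF p0] VV_card by auto

lemma A_inv: assumes "a \<in> AA" "a \<noteq> ZM" shows "\<exists>e\<in>AA. mm e a = IM"
proof -
  have inj: "inj_on (mm a) AA"
  proof (rule inj_onI)
    fix x y assume xy: "x \<in> AA" "y \<in> AA" "mm a x = mm a y"
    let ?d = "ad x (mneg m p y)"
    have dA: "?d \<in> AA" using xy A_add A_neg by blast
    have "mm a ?d = ad (mm a y) (mm a (mneg m p y))" by (simp add: mm_distr_r[OF p1] xy(3))
    also have "\<dots> = mm a (ad (mneg m p y) y)" by (simp add: mm_distr_r[OF p1] madd_comm)
    also have "\<dots> = ZM" by (simp add: madd_neg mm_zero_r)
    finally have ad0: "mm a ?d = ZM" .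
    have "?d = ZM"
    proof (rule ccontr)
      assume "?d \<noteq> ZM"
      then obtain v where v: "v \<in> VV" "mv ?d v \<noteq> (\<lambda>_. 0)" using nonzero_witness dA by blast
      have "mv a (mv ?d v) = (\<lambda>_. 0)" by (simp add: mv_mm[symmetric] ad0 mv_zero_mat)
      then have "a = ZM" using kernel[OF assms(1) mv_closed[OF p0] v(2)] by blast
      then show False using assms(2) by simp
    qed
    then show "x = y" using madd_cancel A_M xy by blast
  qed
  have "mm a ` AA \<subseteq> AA" using A_mult assms(1) by blast
  then have "mm a ` AA = AA" using endo_inj_surj[OF A_fin _ inj] by blast
  moreover have "IM \<in> AA" using Z_A one_Z by blast
  ultimately have "IM \<in> mm a ` AA" by simp
  then obtain e where e: "e \<in> AA" "IM = mm a e" by (rule imageE)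
  have "mm e a = IM" using A_comm[OF assms(1) e(1)] e(2) by simp
  then show ?thesis using e(1) by blast
qed


lemma vadd_swap: "vadd m p (vadd m p x y) (vadd m p u w) = vadd m p (vadd m p x u) (vadd m p y w)"
proof -
  have "vadd m p (vadd m p x y) (vadd m p u w) = vadd m p x (vadd m p (vadd m p y u) w)"
    by (simp only: vadd_assoc)
  also have "\<dots> = vadd m p x (vadd m p (vadd m p u y) w)" by (simp only: vadd_comm[of m p y u])
  also have "\<dots> = vadd m p (vadd m p x u) (vadd m p y w)" by (simp only: vadd_assoc)
  finally show ?thesis .
qed

lemma z_in: "(\<lambda>_. 0) \<in> VV" using p0 by (auto simp: fvecs_def)

lemma H_nz: "ZM \<notin> H"
proof
  assume "ZM \<in> H"
  then have "ZM \<in> carrier (GL m p)" using subgroup.subset[OF sub] by blast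
  then obtain B where "mm ZM B = IM" by (auto simp: GL_def)
  then have zi: "ZM = IM" by (simp add: mm_zero_l)
  have "IM 0 0 = (0::int)" using fun_cong[OF fun_cong[OF zi, of 0], of 0] by simp
  then show False using m0 by (simp add: fmat_one_def)
qed

lemma ZM_A: "ZM \<in> AA" by (rule Acl.Acl0)

lemma card_Z_le: "card ZZ \<le> card AA - 1"
proof -
  have "ZZ \<subseteq> AA - {ZM}" using Z_A Z_H H_nz by blast
  then have "card ZZ \<le> card (AA - {ZM})" using A_fin by (intro card_mono) auto
  then show ?thesis using ZM_A A_fin by simp
qed

lemma spans:
  assumes m1: "m > 1" and zb: "real p * real (card ZZ) \<ge> real p ^ m - 1"
  shows "\<forall>v\<in>VV. \<exists>a\<in>AA. mv a (evec 0) = v"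
proof (rule ccontr)
  assume "\<not> ?thesis"
  then obtain v1 where v1: "v1 \<in> VV" "\<forall>a\<in>AA. mv a (evec 0) \<noteq> v1" by blast
  let ?e = "evec 0"
  let ?phi = "\<lambda>(a, b). vadd m p (mv a ?e) (mv b v1)"
  have zz: "vadd m p (\<lambda>_. 0) (\<lambda>_. 0) = (\<lambda>_. 0)" using vadd_zero[OF z_in] .
  have inj: "inj_on ?phi (AA \<times> AA)"
  proof (rule inj_onI, clarify)
    fix a b a' b' assume ab: "a \<in> AA" "b \<in> AA" "a' \<in> AA" "b' \<in> AA"
      and eq: "vadd m p (mv a ?e) (mv b v1) = vadd m p (mv a' ?e) (mv b' v1)"
    define c where "c = ad a (mneg m p a')"
    define d where "d = ad b (mneg m p b')"
    have cA: "c \<in> AA" using ab A_add A_neg c_def by blast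
    have dA: "d \<in> AA" using ab A_add A_neg d_def by blast
    have n1: "ad a' (mneg m p a') = ZM" by (subst madd_comm) (rule madd_neg)
    have n2: "ad b' (mneg m p b') = ZM" by (subst madd_comm) (rule madd_neg)
    have key: "vadd m p (mv c ?e) (mv d v1) = (\<lambda>_. 0)"
    proof -
      have "vadd m p (mv c ?e) (mv d v1) =
          vadd m p (vadd m p (mv a ?e) (mv (mneg m p a') ?e)) (vadd m p (mv b v1) (mv (mneg m p b') v1))"
        by (simp add: c_def d_def mv_madd)
      also have "\<dots> = vadd m p (vadd m p (mv a ?e) (mv b v1)) (vadd m p (mv (mneg m p a') ?e) (mv (mneg m p b') v1))"
        by (rule vadd_swap)
      also have "\<dots> = vadd m p (vadd m p (mv a' ?e) (mv b' v1)) (vadd m p (mv (mneg m p a') ?e) (mv (mneg m p b') v1))"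
        by (simp only: eq)
      also have "\<dots> = vadd m p (vadd m p (mv a' ?e) (mv (mneg m p a') ?e)) (vadd m p (mv b' v1) (mv (mneg m p b') v1))"
        by (rule vadd_swap)
      also have "\<dots> = vadd m p (mv (ad a' (mneg m p a')) ?e) (mv (ad b' (mneg m p b')) v1)"
        by (simp add: mv_madd)
      also have "\<dots> = (\<lambda>_. 0)" by (simp only: n1 n2 mv_zero_mat zz)
      finally show ?thesis .
    qed
    have d0: "d = ZM"
    proof (rule ccontr)
      assume "d \<noteq> ZM"
      then obtain e where e: "e \<in> AA" "mm e d = IM" using A_inv dA by blast
      have "mv (mneg m p c) ?e = vadd m p (mv (mneg m p c) ?e) (\<lambda>_. 0)"
        using vadd_zero[OF mv_closed[OF p0]] by simp
      also have "\<dots> = vadd m p (mv (mneg m p c) ?e) (vadd m p (mv c ?e) (mv d v1))"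
        by (simp only: key)
      also have "\<dots> = vadd m p (mv (ad (mneg m p c) c) ?e) (mv d v1)"
        by (simp add: vadd_assoc mv_madd)
      also have "\<dots> = mv d v1"
        using vadd_zero[OF mv_closed[OF p0]] by (simp add: madd_neg mv_zero_mat vadd_comm)
      finally have dv: "mv d v1 = mv (mneg m p c) ?e" by simp
      have "v1 = mv IM v1" using mv_one[OF v1(1)] by simp
      also have "\<dots> = mv e (mv d v1)" by (simp add: e(2)[symmetric] mv_mm)
      also have "\<dots> = mv (mm e (mneg m p c)) ?e" by (simp add: dv mv_mm)
      finally have "v1 = mv (mm e (mneg m p c)) ?e" .
      moreover have "mm e (mneg m p c) \<in> AA" by (rule A_mult[OF e(1) A_neg[OF cA]])
      ultimately show False using v1(2) by blast
    qed
    then have "ad b (mneg m p b') = ZM" using d_def by simp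
    then have "b = b'" by (rule madd_cancel[OF A_M[OF ab(2)] A_M[OF ab(4)]])
    have "mv c ?e = (\<lambda>_. 0)"
      using key vadd_zero[OF mv_closed[OF p0]] by (simp add: d0 mv_zero_mat)
    then have "c = ZM" using kernel[OF cA v0_in v0_nz] by blast
    then have "ad a (mneg m p a') = ZM" using c_def by simp
    then have "a = a'" by (rule madd_cancel[OF A_M[OF ab(1)] A_M[OF ab(3)]])
    then show "a = a' \<and> b = b'" using \<open>b = b'\<close> by simp
  qed
  have "?phi ` (AA \<times> AA) \<subseteq> VV" using vadd_closed[OF p0] by auto
  then have "card (AA \<times> AA) \<le> card VV" using card_inj_on_le[OF inj _ VV_fin] by blast
  then have q2: "card AA * card AA \<le> p ^ m" using VV_card by (simp add: card_cartesian_product)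
  have "card AA > 0" using ZM_A A_fin card_gt_0_iff by blast
  then have cq: "card ZZ + 1 \<le> card AA" using card_Z_le by linarith
  show False using numeric[OF m1 p1 q2 cq] zb by simp
qed


lemma H_A:
  assumes m1: "m > 1" and zb: "real p * real (card ZZ) \<ge> real p ^ m - 1" and h: "h \<in> H"
  shows "h \<in> AA"
proof -
  let ?e = "evec 0"
  have sp: "\<forall>v\<in>VV. \<exists>a\<in>AA. mv a ?e = v" by (rule spans[OF m1 zb])
  obtain a where a: "a \<in> AA" "mv a ?e = mv h ?e" using sp mv_closed[OF p0] by blast
  have "h = a"
  proof (rule mat_ext[OF p1 H_M[OF h] A_M[OF a(1)]])
    fix v assume "v \<in> VV"
    then obtain b where b: "b \<in> AA" "mv b ?e = v" using sp by blast
    have "mv h v = mv (mm h b) ?e" by (simp add: b(2)[symmetric] mv_mm)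
    also have "\<dots> = mv (mm b h) ?e" using A_comm_H[OF b(1) h] by simp
    also have "\<dots> = mv b (mv a ?e)" by (simp add: mv_mm a(2))
    also have "\<dots> = mv (mm a b) ?e" using A_comm[OF a(1) b(1)] by (simp add: mv_mm)
    also have "\<dots> = mv a v" by (simp add: mv_mm b(2))
    finally show "mv h v = mv a v" .
  qed
  then show ?thesis using a(1) by simp
qed

lemma Rg_cring: "cring (Rg m p ZZ)"
proof (rule cringI)
  show "abelian_group (Rg m p ZZ)"
  proof (rule abelian_groupI)
    fix x y z
    show "x \<in> carrier (Rg m p ZZ) \<Longrightarrow> y \<in> carrier (Rg m p ZZ) \<Longrightarrow> x \<oplus>\<^bsub>Rg m p ZZ\<^esub> y \<in> carrier (Rg m p ZZ)"
      by (simp add: Rg_def A_add)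
    show "\<zero>\<^bsub>Rg m p ZZ\<^esub> \<in> carrier (Rg m p ZZ)" by (simp add: Rg_def ZM_A)
    show "x \<oplus>\<^bsub>Rg m p ZZ\<^esub> y \<oplus>\<^bsub>Rg m p ZZ\<^esub> z = x \<oplus>\<^bsub>Rg m p ZZ\<^esub> (y \<oplus>\<^bsub>Rg m p ZZ\<^esub> z)"
      by (simp add: Rg_def madd_assoc)
    show "x \<oplus>\<^bsub>Rg m p ZZ\<^esub> y = y \<oplus>\<^bsub>Rg m p ZZ\<^esub> x" by (simp add: Rg_def madd_comm)
    show "x \<in> carrier (Rg m p ZZ) \<Longrightarrow> \<zero>\<^bsub>Rg m p ZZ\<^esub> \<oplus>\<^bsub>Rg m p ZZ\<^esub> x = x"
      by (simp add: Rg_def madd_zero_l A_M)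
    show "x \<in> carrier (Rg m p ZZ) \<Longrightarrow> \<exists>y\<in>carrier (Rg m p ZZ). y \<oplus>\<^bsub>Rg m p ZZ\<^esub> x = \<zero>\<^bsub>Rg m p ZZ\<^esub>"
      by (auto simp: Rg_def intro!: bexI[of _ "mneg m p x"] A_neg madd_neg)
  qed
next
  show "comm_monoid (Rg m p ZZ)"
  proof (rule comm_monoidI)
    fix x y z
    show "x \<in> carrier (Rg m p ZZ) \<Longrightarrow> y \<in> carrier (Rg m p ZZ) \<Longrightarrow> x \<otimes>\<^bsub>Rg m p ZZ\<^esub> y \<in> carrier (Rg m p ZZ)"
      by (simp add: Rg_def A_mult)
    show "\<one>\<^bsub>Rg m p ZZ\<^esub> \<in> carrier (Rg m p ZZ)" by (simp add: Rg_def Z_A one_Z)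
    show "x \<otimes>\<^bsub>Rg m p ZZ\<^esub> y \<otimes>\<^bsub>Rg m p ZZ\<^esub> z = x \<otimes>\<^bsub>Rg m p ZZ\<^esub> (y \<otimes>\<^bsub>Rg m p ZZ\<^esub> z)"
      by (simp add: Rg_def mm_assoc[OF p1])
    show "x \<in> carrier (Rg m p ZZ) \<Longrightarrow> \<one>\<^bsub>Rg m p ZZ\<^esub> \<otimes>\<^bsub>Rg m p ZZ\<^esub> x = x"
      by (simp add: Rg_def mm_one_l[OF p1] A_M)
    show "x \<in> carrier (Rg m p ZZ) \<Longrightarrow> y \<in> carrier (Rg m p ZZ) \<Longrightarrow> x \<otimes>\<^bsub>Rg m p ZZ\<^esub> y = y \<otimes>\<^bsub>Rg m p ZZ\<^esub> x"
      by (simp add: Rg_def A_comm)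
  qed
next
  fix x y z
  show "(x \<oplus>\<^bsub>Rg m p ZZ\<^esub> y) \<otimes>\<^bsub>Rg m p ZZ\<^esub> z = x \<otimes>\<^bsub>Rg m p ZZ\<^esub> z \<oplus>\<^bsub>Rg m p ZZ\<^esub> y \<otimes>\<^bsub>Rg m p ZZ\<^esub> z"
    by (simp add: Rg_def mm_distr_l[OF p1])
qed

lemma Rg_field: "field (Rg m p ZZ)"
proof (rule cring.cring_fieldI2[OF Rg_cring])
  show "\<zero>\<^bsub>Rg m p ZZ\<^esub> \<noteq> \<one>\<^bsub>Rg m p ZZ\<^esub>" using H_nz H_one by (auto simp: Rg_def)
next
  fix a assume "a \<in> carrier (Rg m p ZZ)" "a \<noteq> \<zero>\<^bsub>Rg m p ZZ\<^esub>"
  then have a: "a \<in> AA" "a \<noteq> ZM" by (auto simp: Rg_def)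
  obtain e where e: "e \<in> AA" "mm e a = IM" using A_inv[OF a] by blast
  have "mm a e = IM" using e A_comm[OF a(1) e(1)] by simp
  then show "\<exists>b\<in>carrier (Rg m p ZZ). a \<otimes>\<^bsub>Rg m p ZZ\<^esub> b = \<one>\<^bsub>Rg m p ZZ\<^esub>"
    using e(1) by (auto simp: Rg_def)
qed

lemma final:
  assumes m1: "m > 1" and zb: "real p * real (card ZZ) \<ge> real p ^ m - 1"
    and cH: "card H \<ge> p ^ m - 1"
  shows "card H = p ^ m - 1 \<and> cyclic_group ((GL m p)\<lparr>carrier := H\<rparr>)"
proof -
  have HA: "H \<subseteq> AA - {ZM}" using H_A[OF m1 zb] H_nz by blast
  have cA: "card (AA - {ZM}) = card AA - 1" using ZM_A A_fin by simp
  have le: "card H \<le> card (AA - {ZM})" using HA A_fin by (intro card_mono) auto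
  have "card AA - 1 \<le> p ^ m - 1" using A_card by simp
  then have c1: "card H = p ^ m - 1" using le cA cH by linarith
  have Heq: "H = AA - {ZM}"
    using card_subset_eq[OF _ HA] A_fin le cA c1 cH \<open>card AA - 1 \<le> p ^ m - 1\<close> by auto
  interpret F: field "Rg m p ZZ" by (rule Rg_field)
  have fin: "finite (carrier (Rg m p ZZ))" using A_fin by (simp add: Rg_def)
  obtain a where a: "a \<in> carrier (mult_of (Rg m p ZZ))"
    and gen: "carrier (mult_of (Rg m p ZZ)) = {a [^]\<^bsub>Rg m p ZZ\<^esub> i | i::nat. i \<in> UNIV}"
    using F.finite_field_mult_group_has_gen[OF fin] by blast
  have cm: "carrier (mult_of (Rg m p ZZ)) = H" using Heq by (simp add: Rg_def)
  let ?G = "(GL m p)\<lparr>carrier := H\<rparr>"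
  have grp: "group ?G" by (rule subgroup.subgroup_is_group[OF sub GL_group[OF p1]])
  have pw: "a [^]\<^bsub>Rg m p ZZ\<^esub> (n::nat) = a [^]\<^bsub>?G\<^esub> n" for n
    by (induction n) (simp_all add: Rg_def GL_def)
  have aH: "a \<in> H" using a cm by blast
  have "H = range (\<lambda>n::int. a [^]\<^bsub>?G\<^esub> n)"
  proof
    show "H \<subseteq> range (\<lambda>n::int. a [^]\<^bsub>?G\<^esub> n)"
    proof
      fix x assume "x \<in> H"
      then obtain i :: nat where "x = a [^]\<^bsub>Rg m p ZZ\<^esub> i" using gen cm by auto
      then have "x = a [^]\<^bsub>?G\<^esub> (int i)" using pw[of i] int_pow_int[of ?G a i] by simp
      then show "x \<in> range (\<lambda>n::int. a [^]\<^bsub>?G\<^esub> n)" by blast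
    qed
    show "range (\<lambda>n::int. a [^]\<^bsub>?G\<^esub> n) \<subseteq> H"
      using group.int_pow_closed[OF grp, of a] aH by auto
  qed
  then have "cyclic_group ?G" using group.cyclic_group[OF grp] aH by auto
  then show ?thesis using c1 by simp
qed
end


theorem lemma5p16:
  fixes p m :: nat and H :: "(nat \<Rightarrow> nat \<Rightarrow> int) set"
  assumes "prime p" and "odd p" and "m > 1"
    and "subgroup H (GL m p)"
    and "coprime (card H) p"
    and "\<forall>v \<in> fvecs m p - {(\<lambda>_. 0)}. \<forall>w \<in> fvecs m p - {(\<lambda>_. 0)}.
           \<exists>h \<in> H. fmat_vec m p h v = w"
    and "card H \<ge> p ^ m - 1"
    and "real (card (group_center ((GL m p)\<lparr>carrier := H\<rparr>))) \<ge> (real p ^ m - 1) / real p"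
  shows "card H = p ^ m - 1 \<and> cyclic_group ((GL m p)\<lparr>carrier := H\<rparr>)"
proof -
  have p1: "p > 1" using assms(1) prime_gt_1_nat by blast
  have m0: "m > 0" using assms(3) by simp
  interpret L: lctx p m H
    by (rule lctx.intro[OF p1 m0 assms(4) assms(6)])
  have pr: "real p > 0" using p1 by simp
  have "real p ^ m - 1 \<le> real (card (group_center ((GL m p)\<lparr>carrier := H\<rparr>))) * real p"
    using assms(8) pr by (simp add: pos_divide_le_eq)
  then have zb: "real p * real (card (group_center ((GL m p)\<lparr>carrier := H\<rparr>))) \<ge> real p ^ m - 1"
    by (simp add: mult.commute)
  show ?thesis using L.final[OF assms(3) zb assms(7)] .
qed

end
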